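(* Any pairwise trivially balanced lobster has a complete $\alpha$-labeling.
   Context: For a graph $G=(V,E)$ with $m$ edges, an $\alpha$-labeling with critical number $k$ is an injective $f:V\to\{0,\ldots,m\}$ with distinct edge labels $|f(u)-f(v)|$ such that every edge $uv$ satisfies $f(u)\le k<f(v)$ or $f(v)\le k<f(u)$; it is complete if $f$ is bijective. A lobster is a tree whose base (delete all degree-one vertices) is a caterpillar (a tree whose base is a path). A lobster $L$ is described by a spine, a path $(v_1,\ldots,v_r)$, and lobes $F_i$ at $v_i$ (pairwise vertex-disjoint trees meeting the spine only in $v_i$, $L$ the union of spine and lobes), each lobe $F_i$ consisting of $v_i$, vertices adjacent to $v_i$, and further leaves attached to those vertices; a neighbour of $v_i$ in $F_i$ with no further leaves is a pendant vertex at $v_i$, and a neighbour $u$ of $v_i$ together with its $\ge1$ further leaves is a non-pendant branch. $L$ is pairwise trivially balanced if $r$ is even and, for each odd $i\in\{1,\ldots,r-1\}$, there are integers $q_i\ge 0$ and $t_i\ge1$ such that each of $F_i$ and $F_{i+1}$ has exactly $q_i$ non-pendant branches, each consisting of a neighbour of the spinal vertex together with exactly $t_i$ further leaves (the numbers of pendant vertices at $v_i$ and $v_{i+1}$ being arbitrary). *)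

theory Defs
  imports Main
begin

definition simple_graph :: "'a set \<Rightarrow> 'a set set \<Rightarrow> bool" where
  "simple_graph V E \<longleftrightarrow> finite V \<and> (\<forall>e\<in>E. e \<subseteq> V \<and> card e = 2)"

definition adj_rel :: "'a set set \<Rightarrow> ('a \<times> 'a) set" where
  "adj_rel E = {(x, y). {x, y} \<in> E}"

definition connected_graph :: "'a set \<Rightarrow> 'a set set \<Rightarrow> bool" where
  "connected_graph V E \<longleftrightarrow> (\<forall>x\<in>V. \<forall>y\<in>V. (x, y) \<in> (adj_rel E)\<^sup>*)"

definition is_tree :: "'a set \<Rightarrow> 'a set set \<Rightarrow> bool" where
  "is_tree V E \<longleftrightarrow> simple_graph V E \<and> V \<noteq> {} \<and> connected_graph V E \<and> card E = card V - 1"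

definition alpha_labeling :: "'a set \<Rightarrow> 'a set set \<Rightarrow> ('a \<Rightarrow> nat) \<Rightarrow> nat \<Rightarrow> bool" where
  "alpha_labeling V E f k \<longleftrightarrow>
     inj_on f V \<and> f ` V \<subseteq> {0..card E} \<and>
     (\<forall>x y x' y'. {x, y} \<in> E \<longrightarrow> {x', y'} \<in> E \<longrightarrow>
        \<bar>int (f x) - int (f y)\<bar> = \<bar>int (f x') - int (f y')\<bar> \<longrightarrow> {x, y} = {x', y'}) \<and>
     (\<forall>x y. {x, y} \<in> E \<longrightarrow> (f x \<le> k \<and> k < f y) \<or> (f y \<le> k \<and> k < f x))"

definition complete_alpha_labeling :: "'a set \<Rightarrow> 'a set set \<Rightarrow> ('a \<Rightarrow> nat) \<Rightarrow> nat \<Rightarrow> bool" where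
  "complete_alpha_labeling V E f k \<longleftrightarrow> alpha_labeling V E f k \<and> bij_betw f V {0..card E}"

definition lobe_nbrs :: "'a set set \<Rightarrow> (nat \<Rightarrow> 'a) \<Rightarrow> (nat \<Rightarrow> 'a set) \<Rightarrow> nat \<Rightarrow> 'a set" where
  "lobe_nbrs E v F i = {u \<in> F i. {v i, u} \<in> E}"

definition lobe_leaves :: "'a set set \<Rightarrow> (nat \<Rightarrow> 'a) \<Rightarrow> (nat \<Rightarrow> 'a set) \<Rightarrow> nat \<Rightarrow> 'a \<Rightarrow> 'a set" where
  "lobe_leaves E v F i u = {w \<in> F i. {u, w} \<in> E \<and> w \<noteq> v i}"

text \<open>Non-pendant branches at v i (identified by their neighbour u of v i).\<close>
definition nonpendant :: "'a set set \<Rightarrow> (nat \<Rightarrow> 'a) \<Rightarrow> (nat \<Rightarrow> 'a set) \<Rightarrow> nat \<Rightarrow> 'a set" where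
  "nonpendant E v F i = {u \<in> lobe_nbrs E v F i. lobe_leaves E v F i u \<noteq> {}}"

definition lobster_description ::
  "'a set \<Rightarrow> 'a set set \<Rightarrow> nat \<Rightarrow> (nat \<Rightarrow> 'a) \<Rightarrow> (nat \<Rightarrow> 'a set) \<Rightarrow> bool" where
  "lobster_description V E r v F \<longleftrightarrow>
     is_tree V E \<and>
     inj_on v {1..r} \<and>
     (\<forall>i\<in>{1..<r}. {v i, v (Suc i)} \<in> E) \<and>
     (\<forall>i\<in>{1..r}. v i \<in> F i \<and> F i \<inter> v ` {1..r} = {v i}) \<and>
     (\<forall>i\<in>{1..r}. \<forall>j\<in>{1..r}. i \<noteq> j \<longrightarrow> F i \<inter> F j = {}) \<and>
     V = (\<Union>i\<in>{1..r}. F i) \<and>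
     E = {{v i, v (Suc i)} | i. 1 \<le> i \<and> i < r} \<union> (\<Union>i\<in>{1..r}. {e \<in> E. e \<subseteq> F i}) \<and>
     (\<forall>i\<in>{1..r}.
        (\<forall>e\<in>E. e \<subseteq> F i \<longrightarrow>
           (\<exists>u\<in>lobe_nbrs E v F i. e = {v i, u}) \<or>
           (\<exists>u\<in>lobe_nbrs E v F i. \<exists>w\<in>F i - ({v i} \<union> lobe_nbrs E v F i). e = {u, w})) \<and>
        (\<forall>w\<in>F i - ({v i} \<union> lobe_nbrs E v F i). \<exists>u\<in>lobe_nbrs E v F i. {u, w} \<in> E))"

definition pairwise_trivially_balanced ::
  "'a set set \<Rightarrow> nat \<Rightarrow> (nat \<Rightarrow> 'a) \<Rightarrow> (nat \<Rightarrow> 'a set) \<Rightarrow> bool" where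
  "pairwise_trivially_balanced E r v F \<longleftrightarrow>
     even r \<and>
     (\<forall>i\<in>{1..<r}. odd i \<longrightarrow>
        (\<exists>q t::nat. t \<ge> 1 \<and>
           card (nonpendant E v F i) = q \<and> card (nonpendant E v F (Suc i)) = q \<and>
           (\<forall>u\<in>nonpendant E v F i. card (lobe_leaves E v F i u) = t) \<and>
           (\<forall>u\<in>nonpendant E v F (Suc i). card (lobe_leaves E v F (Suc i) u) = t)))"

end

theory Submission
  imports Defs
begin

definition lab :: "'a set \<Rightarrow> ('a \<times> 'a) set \<Rightarrow> ('a \<Rightarrow> nat) \<Rightarrow> nat \<Rightarrow> bool" where
 "lab V P f k \<longleftrightarrow> finite V \<and> bij_betw f V {0..card V - 1} \<and> k < card V \<and>
   (\<forall>p\<in>P. fst p \<in> V \<and> snd p \<in> V \<and> f (fst p) \<le> k \<and> k < f (snd p)) \<and>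
   inj_on (\<lambda>p. f (snd p) - f (fst p)) P"

lemma bij_by_inj:
  assumes "inj_on g A" "g ` A \<subseteq> B" "card A = card B" "finite B"
  shows "bij_betw g A B"
  by (metis assms bij_betw_def card_image card_subset_eq)

lemma lab_range: "lab V P f k \<Longrightarrow> v \<in> V \<Longrightarrow> f v < card V"
  unfolding lab_def bij_betw_def by (metis atLeastAtMost_iff card_gt_0_iff empty_iff image_eqI le_imp_less_Suc Suc_pred' less_nat_zero_code subsetI)

lemma glue:
  assumes L1: "lab V1 P1 f1 k1" and L2: "lab V2 P2 f2 k2" and D: "V1 \<inter> V2 = {}"
    and a: "a \<in> V1" "f1 a = k1+1" and b: "b \<in> V2" "f2 b = 0"
  defines "g \<equiv> \<lambda>v. if v \<in> V1 then (if f1 v \<le> k1 then f1 v else f1 v + card V2) else f2 v + k1 + 1"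
  shows "lab (V1 \<union> V2) (P1 \<union> P2 \<union> {(b,a)}) g (k1+k2+1)"
    and "\<And>c. c \<in> V2 \<Longrightarrow> g c = f2 c + k1 + 1"
    and "\<And>c. c \<in> V1 \<Longrightarrow> f1 c \<le> k1 \<Longrightarrow> g c = f1 c"
proof -
  have fin1: "finite V1" and fin2: "finite V2" using L1 L2 unfolding lab_def by auto
  have inj1: "inj_on f1 V1" and inj2: "inj_on f2 V2" using L1 L2 unfolding lab_def bij_betw_def by auto
  have r1: "\<And>v. v \<in> V1 \<Longrightarrow> f1 v < card V1" using lab_range[OF L1] .
  have r2: "\<And>v. v \<in> V2 \<Longrightarrow> f2 v < card V2" using lab_range[OF L2] .
  have k1: "k1 < card V1" and k2: "k2 < card V2" using L1 L2 unfolding lab_def by auto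
  have e1: "\<And>p. p \<in> P1 \<Longrightarrow> fst p \<in> V1 \<and> snd p \<in> V1 \<and> f1 (fst p) \<le> k1 \<and> k1 < f1 (snd p)"
    using L1 unfolding lab_def by auto
  have e2: "\<And>p. p \<in> P2 \<Longrightarrow> fst p \<in> V2 \<and> snd p \<in> V2 \<and> f2 (fst p) \<le> k2 \<and> k2 < f2 (snd p)"
    using L2 unfolding lab_def by auto
  have d1: "inj_on (\<lambda>p. f1 (snd p) - f1 (fst p)) P1" using L1 unfolding lab_def by auto
  have d2: "inj_on (\<lambda>p. f2 (snd p) - f2 (fst p)) P2" using L2 unfolding lab_def by auto
  have cardU: "card (V1 \<union> V2) = card V1 + card V2" using card_Un_disjoint[OF fin1 fin2 D] .
  have injg: "inj_on g (V1 \<union> V2)"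
  proof (rule inj_onI)
    fix u w assume u: "u \<in> V1 \<union> V2" and w: "w \<in> V1 \<union> V2" and eq: "g u = g w"
    show "u = w"
    proof (cases "u \<in> V1")
      case True
      show ?thesis
      proof (cases "w \<in> V1")
        case True
        with \<open>u \<in> V1\<close> eq have "f1 u = f1 w" unfolding g_def by (auto split: if_splits)
        then show ?thesis using inj1 True \<open>u \<in> V1\<close> by (meson inj_onD)
      next
        case False
        then have "w \<in> V2" using w by auto
        then show ?thesis using eq True False r2[of w] unfolding g_def by (auto split: if_splits)
      qed
    next
      case False
      then have uV2: "u \<in> V2" using u by auto
      show ?thesis
      proof (cases "w \<in> V1")
        case True
        then show ?thesis using eq False uV2 r2[of u] unfolding g_def by (auto split: if_splits)
      next
        case False
        then have "w \<in> V2" using w by auto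
        with uV2 eq \<open>u \<notin> V1\<close> False have "f2 u = f2 w" unfolding g_def by auto
        then show ?thesis using inj2 uV2 \<open>w \<in> V2\<close> by (meson inj_onD)
      qed
    qed
  qed
  have img: "g ` (V1 \<union> V2) \<subseteq> {0..card (V1 \<union> V2) - 1}"
  proof
    fix y assume "y \<in> g ` (V1 \<union> V2)"
    then obtain v where v: "v \<in> V1 \<union> V2" "y = g v" by auto
    show "y \<in> {0..card (V1 \<union> V2) - 1}"
      using v r1[of v] r2[of v] k1 cardU unfolding g_def by (auto split: if_splits)
  qed
  have bij: "bij_betw g (V1 \<union> V2) {0..card (V1 \<union> V2) - 1}"
    by (rule bij_by_inj[OF injg img]) (use k1 in \<open>auto simp: cardU fin1 fin2\<close>)
  have gV1lo: "\<And>v. v \<in> V1 \<Longrightarrow> f1 v \<le> k1 \<Longrightarrow> g v = f1 v" unfolding g_def by auto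
  have gV1hi: "\<And>v. v \<in> V1 \<Longrightarrow> \<not> f1 v \<le> k1 \<Longrightarrow> g v = f1 v + card V2" unfolding g_def by auto
  have gV2: "\<And>v. v \<in> V2 \<Longrightarrow> g v = f2 v + k1 + 1" unfolding g_def using D by auto
  have edges: "\<forall>p\<in>P1 \<union> P2 \<union> {(b,a)}. fst p \<in> V1 \<union> V2 \<and> snd p \<in> V1 \<union> V2 \<and> g (fst p) \<le> k1+k2+1 \<and> k1+k2+1 < g (snd p)"
  proof
    fix p assume p: "p \<in> P1 \<union> P2 \<union> {(b,a)}"
    show "fst p \<in> V1 \<union> V2 \<and> snd p \<in> V1 \<union> V2 \<and> g (fst p) \<le> k1+k2+1 \<and> k1+k2+1 < g (snd p)"
    proof (cases "p \<in> P1")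
      case True
      then show ?thesis using e1[OF True] gV1lo gV1hi k2 by auto
    next
      case False
      show ?thesis
      proof (cases "p \<in> P2")
        case True
        then show ?thesis using e2[OF True] gV2 by auto
      next
        case False
        then have "p = (b,a)" using p \<open>p \<notin> P1\<close> by auto
        then show ?thesis using a b gV2 gV1hi k2 by auto
      qed
    qed
  qed
  define dg where "dg = (\<lambda>p. g (snd p) - g (fst p))"
  have dP1: "\<And>p. p \<in> P1 \<Longrightarrow> dg p = f1 (snd p) - f1 (fst p) + card V2 \<and> f1 (fst p) < f1 (snd p)"
    unfolding dg_def using e1 gV1lo gV1hi by fastforce
  have dP2: "\<And>p. p \<in> P2 \<Longrightarrow> dg p = f2 (snd p) - f2 (fst p) \<and> f2 (snd p) - f2 (fst p) < card V2"
    unfolding dg_def using e2 gV2 r2 by fastforce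
  have dba: "dg (b,a) = card V2" unfolding dg_def using a b gV2 gV1hi by auto
  have injd: "inj_on dg (P1 \<union> P2 \<union> {(b,a)})"
  proof (rule inj_onI)
    fix p p' assume p: "p \<in> P1 \<union> P2 \<union> {(b,a)}" and p': "p' \<in> P1 \<union> P2 \<union> {(b,a)}" and eq: "dg p = dg p'"
    consider "p \<in> P1" | "p \<in> P2" | "p = (b,a)" using p by auto
    then show "p = p'"
    proof cases
      case 1
      consider "p' \<in> P1" | "p' \<in> P2" | "p' = (b,a)" using p' by auto
      then show ?thesis
      proof cases
        case 1
        then show ?thesis using \<open>p \<in> P1\<close> eq dP1[of p] dP1[of p'] d1 by (simp add: inj_on_def)
      qed (use 1 eq dP1 dP2 dba in fastforce)+
    next
      case 2
      consider "p' \<in> P1" | "p' \<in> P2" | "p' = (b,a)" using p' by auto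
      then show ?thesis
      proof cases
        case 2
        then show ?thesis using \<open>p \<in> P2\<close> eq dP2[of p] dP2[of p'] d2 by (simp add: inj_on_def)
      qed (use 2 eq dP1 dP2 dba in fastforce)+
    next
      case 3
      then show ?thesis using p' eq dP1 dP2 dba by fastforce
    qed
  qed
  show "lab (V1 \<union> V2) (P1 \<union> P2 \<union> {(b,a)}) g (k1+k2+1)"
    unfolding lab_def using fin1 fin2 bij edges injd k1 k2 cardU unfolding dg_def by auto
  show "\<And>c. c \<in> V2 \<Longrightarrow> g c = f2 c + k1 + 1" by (rule gV2)
  show "\<And>c. c \<in> V1 \<Longrightarrow> f1 c \<le> k1 \<Longrightarrow> g c = f1 c" by (rule gV1lo)
qed

lemma lab_basic:
  assumes "lab V P f k"
  shows "finite V" "inj_on f V" "\<And>v. v \<in> V \<Longrightarrow> f v < card V" "k < card V"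
    "\<And>p. p \<in> P \<Longrightarrow> fst p \<in> V \<and> snd p \<in> V \<and> f (fst p) \<le> k \<and> k < f (snd p)"
    "inj_on (\<lambda>p. f (snd p) - f (fst p)) P"
  using assms lab_range[OF assms] unfolding lab_def bij_betw_def by auto

lemma opC:
  assumes L: "lab V P f k" and w: "w \<in> V" "f w = 0" and z: "z \<notin> V"
  shows "lab (insert z V) (insert (w,z) P) (f(z := card V)) k"
proof -
  note B = lab_basic[OF L]
  let ?g = "f(z := card V)"
  have cd: "card (insert z V) = Suc (card V)" using B(1) z by simp
  have inj: "inj_on ?g (insert z V)"
    using B(2,3) z unfolding inj_on_def by (metis fun_upd_apply insert_iff less_irrefl)
  have gle: "?g v \<le> card V" if "v \<in> insert z V" for v
  proof (cases "v = z")
    case True then show ?thesis by simp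
  next
    case False then have "v \<in> V" using that by simp
    then show ?thesis using B(3)[of v] False by simp
  qed
  have img: "?g ` insert z V \<subseteq> {0..card (insert z V) - 1}"
    unfolding image_subset_iff using gle cd by simp
  have bij: "bij_betw ?g (insert z V) {0..card (insert z V) - 1}"
    by (rule bij_by_inj[OF inj img]) (auto simp: cd)
  have e: "\<forall>p\<in>insert (w,z) P. fst p \<in> insert z V \<and> snd p \<in> insert z V \<and> ?g (fst p) \<le> k \<and> k < ?g (snd p)"
    using B(4,5) w z by auto
  have dd: "?g (snd p) - ?g (fst p) = f (snd p) - f (fst p) \<and> f (snd p) - f (fst p) < card V" if "p \<in> P" for p
  proof -
    have "fst p \<in> V" "snd p \<in> V" using B(5)[OF that] by auto
    then have "fst p \<noteq> z" "snd p \<noteq> z" using z by auto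
    then show ?thesis using B(3)[OF \<open>snd p \<in> V\<close>] by simp
  qed
  have dn: "?g z - ?g w = card V" using w z by auto
  have injd: "inj_on (\<lambda>p. ?g (snd p) - ?g (fst p)) (insert (w,z) P)"
  proof (rule inj_onI)
    fix p p' assume p: "p \<in> insert (w,z) P" and p': "p' \<in> insert (w,z) P"
      and eq: "?g (snd p) - ?g (fst p) = ?g (snd p') - ?g (fst p')"
    show "p = p'"
    proof (cases "p \<in> P")
      case True
      show ?thesis
      proof (cases "p' \<in> P")
        case True
        then show ?thesis using \<open>p \<in> P\<close> eq dd[of p] dd[of p'] B(6) by (simp add: inj_on_def)
      next
        case False
        then have "p' = (w,z)" using p' by simp
        then show ?thesis using \<open>p \<in> P\<close> eq dd[of p] dn by simp
      qed
    next
      case False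
      then have pp: "p = (w,z)" using p by simp
      show ?thesis
      proof (cases "p' \<in> P")
        case True
        then show ?thesis using pp eq dd[of p'] dn by simp
      next
        case False
        then show ?thesis using pp p' by simp
      qed
    qed
  qed
  show ?thesis unfolding lab_def using B(1) bij e injd B(4) cd by auto
qed

lemma opB:
  assumes L: "lab V P f k" and w: "w \<in> V" "f w = k+1" and z: "z \<notin> V"
  defines "g \<equiv> \<lambda>v. if v = z then k+1 else if f v \<le> k then f v else f v + 1"
  shows "lab (insert z V) (insert (z,w) P) g (k+1)" "g w = (k+1)+1"
    "\<And>v. v \<in> V \<Longrightarrow> f v \<le> k \<Longrightarrow> g v = f v"
proof -
  note B = lab_basic[OF L]
  have cd: "card (insert z V) = Suc (card V)" using B(1) z by simp
  have gl: "\<And>v. v \<in> V \<Longrightarrow> f v \<le> k \<Longrightarrow> g v = f v" using z unfolding g_def by auto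
  have gh: "\<And>v. v \<in> V \<Longrightarrow> \<not> f v \<le> k \<Longrightarrow> g v = f v + 1" using z unfolding g_def by auto
  have gz: "g z = k+1" unfolding g_def by simp
  have inj: "inj_on g (insert z V)"
  proof (rule inj_onI)
    fix u v assume u: "u \<in> insert z V" and v: "v \<in> insert z V" and eq: "g u = g v"
    show "u = v"
    proof (cases "u = z")
      case True
      show ?thesis
      proof (cases "v = z")
        case False
        then have "v \<in> V" using v by simp
        then show ?thesis using eq True gz gl gh by (cases "f v \<le> k") auto
      qed (use True in simp)
    next
      case False
      then have uV: "u \<in> V" using u by simp
      show ?thesis
      proof (cases "v = z")
        case True
        then show ?thesis using eq uV gz gl gh by (cases "f u \<le> k") auto
      next
        case False
        then have vV: "v \<in> V" using v by simp
        have "f u = f v" using eq uV vV gl gh by (cases "f u \<le> k"; cases "f v \<le> k") auto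
        then show ?thesis using B(2) uV vV by (meson inj_onD)
      qed
    qed
  qed
  have gle: "g v \<le> card V" if "v \<in> insert z V" for v
  proof (cases "v = z")
    case True then show ?thesis using gz B(4) by simp
  next
    case False then have "v \<in> V" using that by simp
    then show ?thesis using B(3)[of v] gl gh by (cases "f v \<le> k") auto
  qed
  have img: "g ` insert z V \<subseteq> {0..card (insert z V) - 1}"
    unfolding image_subset_iff using gle cd by simp
  have bij: "bij_betw g (insert z V) {0..card (insert z V) - 1}"
    by (rule bij_by_inj[OF inj img]) (auto simp: cd)
  have e: "\<forall>p\<in>insert (z,w) P. fst p \<in> insert z V \<and> snd p \<in> insert z V \<and> g (fst p) \<le> k+1 \<and> k+1 < g (snd p)"
  proof
    fix p assume p: "p \<in> insert (z,w) P"
    show "fst p \<in> insert z V \<and> snd p \<in> insert z V \<and> g (fst p) \<le> k+1 \<and> k+1 < g (snd p)"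
    proof (cases "p \<in> P")
      case True
      then show ?thesis using B(5)[OF True] gl gh by auto
    next
      case False
      then show ?thesis using p gz gh w by auto
    qed
  qed
  have dd: "g (snd p) - g (fst p) = Suc (f (snd p) - f (fst p))" if "p \<in> P" for p
    using B(5)[OF that] gl gh by auto
  have dn: "g w - g z = 1" using w gh gz by auto
  have injd: "inj_on (\<lambda>p. g (snd p) - g (fst p)) (insert (z,w) P)"
  proof (rule inj_onI)
    fix p p' assume p: "p \<in> insert (z,w) P" and p': "p' \<in> insert (z,w) P"
      and eq: "g (snd p) - g (fst p) = g (snd p') - g (fst p')"
    have pos: "f (snd q) - f (fst q) > 0" if "q \<in> P" for q using B(5)[OF that] by auto
    show "p = p'"
    proof (cases "p \<in> P")
      case True
      show ?thesis
      proof (cases "p' \<in> P")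
        case True
        then show ?thesis using \<open>p \<in> P\<close> eq dd[of p] dd[of p'] B(6) by (simp add: inj_on_def)
      next
        case False
        then have "p' = (z,w)" using p' by simp
        then show ?thesis using \<open>p \<in> P\<close> eq dd[of p] dn pos[of p] by simp
      qed
    next
      case False
      then have pp: "p = (z,w)" using p by simp
      show ?thesis
      proof (cases "p' \<in> P")
        case True
        then show ?thesis using pp eq dd[of p'] dn pos[of p'] by simp
      next
        case False
        then show ?thesis using pp p' by simp
      qed
    qed
  qed
  show "lab (insert z V) (insert (z,w) P) g (k+1)"
    unfolding lab_def using B(1) bij e injd cd B(3)[OF w(1)] w(2) by auto
  show "g w = (k+1)+1" using gh w by auto
  show "\<And>v. v \<in> V \<Longrightarrow> f v \<le> k \<Longrightarrow> g v = f v" by (rule gl)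
qed

lemma opC_set:
  assumes "finite S"
  shows "lab V P f k \<Longrightarrow> w \<in> V \<Longrightarrow> f w = 0 \<Longrightarrow> S \<inter> V = {} \<Longrightarrow>
    \<exists>g. lab (V \<union> S) (P \<union> (\<lambda>z. (w,z)) ` S) g k \<and> (\<forall>v\<in>V. g v = f v)"
  using assms
proof (induction S arbitrary: V P f rule: finite_induct)
  case empty
  then show ?case by auto
next
  case (insert z S)
  have zV: "z \<notin> V" using insert.prems(4) by auto
  have "lab (insert z V) (insert (w,z) P) (f(z := card V)) k"
    using opC[OF insert.prems(1,2,3)] insert.prems(4) by auto
  moreover have "S \<inter> insert z V = {}" using insert.prems(4) insert.hyps(2) by auto
  moreover have "(f(z := card V)) w = 0" using insert.prems(2,3) zV by auto
  ultimately obtain g where g: "lab (insert z V \<union> S) (insert (w,z) P \<union> (\<lambda>z. (w,z)) ` S) g k"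
     "\<forall>v\<in>insert z V. g v = (f(z := card V)) v"
    using insert.IH[of "insert z V" "insert (w,z) P" "f(z := card V)"] insert.prems(2) by blast
  have "insert z V \<union> S = V \<union> insert z S" "insert (w,z) P \<union> (\<lambda>z. (w,z)) ` S = P \<union> (\<lambda>z. (w,z)) ` insert z S" by auto
  moreover have "\<forall>v\<in>V. g v = f v" using g(2) zV by auto
  ultimately show ?case using g(1) by (intro exI[of _ g]) auto
qed

lemma opB_set:
  assumes "finite S"
  shows "lab V P f k \<Longrightarrow> w \<in> V \<Longrightarrow> f w = k+1 \<Longrightarrow> S \<inter> V = {} \<Longrightarrow>
    \<exists>g k'. lab (V \<union> S) (P \<union> (\<lambda>z. (z,w)) ` S) g k' \<and> g w = k'+1 \<and> (\<forall>v\<in>V. f v = 0 \<longrightarrow> g v = 0)"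
  using assms
proof (induction S arbitrary: V P f k rule: finite_induct)
  case empty
  then show ?case by auto
next
  case (insert z S)
  define g0 where "g0 = (\<lambda>v. if v = z then k+1 else if f v \<le> k then f v else f v + 1)"
  have zV: "z \<notin> V" using insert.prems(4) by auto
  note o = opB[OF insert.prems(1,2,3) zV, folded g0_def]
  have o2: "g0 w = (k+1)+1" using o(2) unfolding g0_def by simp
  have o3: "\<And>v. v \<in> V \<Longrightarrow> f v \<le> k \<Longrightarrow> g0 v = f v" using o(3) unfolding g0_def by simp
  have "S \<inter> insert z V = {}" using insert.prems(4) insert.hyps(2) by auto
  then obtain g k' where g: "lab (insert z V \<union> S) (insert (z,w) P \<union> (\<lambda>z. (z,w)) ` S) g k'"
     "g w = k'+1" "\<forall>v\<in>insert z V. g0 v = 0 \<longrightarrow> g v = 0"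
    using insert.IH[of "insert z V" "insert (z,w) P" g0 "k+1"] o(1) o2 insert.prems(2) by blast
  have "insert z V \<union> S = V \<union> insert z S" "insert (z,w) P \<union> (\<lambda>z. (z,w)) ` S = P \<union> (\<lambda>z. (z,w)) ` insert z S" by auto
  moreover have "\<forall>v\<in>V. f v = 0 \<longrightarrow> g v = 0" using g(3) o3 by auto
  ultimately show ?case using g by (intro exI[of _ g] exI[of _ k']) auto
qed

lemma transport:
  assumes L: "lab C P f k" and inj: "inj_on \<Phi> C"
  shows "lab (\<Phi> ` C) ((\<lambda>p. (\<Phi> (fst p), \<Phi> (snd p))) ` P) (f \<circ> the_inv_into C \<Phi>) k"
proof -
  note B = lab_basic[OF L]
  have ti: "\<And>x. x \<in> C \<Longrightarrow> the_inv_into C \<Phi> (\<Phi> x) = x" using the_inv_into_f_f[OF inj] .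
  have cd: "card (\<Phi> ` C) = card C" using card_image[OF inj] .
  have bij1: "bij_betw (the_inv_into C \<Phi>) (\<Phi> ` C) C"
    using bij_betw_the_inv_into[of \<Phi> C "\<Phi> ` C"] inj unfolding bij_betw_def by auto
  have bij: "bij_betw (f \<circ> the_inv_into C \<Phi>) (\<Phi> ` C) {0..card (\<Phi> ` C) - 1}"
    using bij_betw_trans[OF bij1] L unfolding lab_def cd by auto
  have e: "\<forall>p\<in>(\<lambda>p. (\<Phi> (fst p), \<Phi> (snd p))) ` P. fst p \<in> \<Phi> ` C \<and> snd p \<in> \<Phi> ` C \<and>
     (f \<circ> the_inv_into C \<Phi>) (fst p) \<le> k \<and> k < (f \<circ> the_inv_into C \<Phi>) (snd p)"
    using B(5) ti by auto
  have injP: "inj_on (\<lambda>p. (\<Phi> (fst p), \<Phi> (snd p))) P"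
  proof (rule inj_onI)
    fix x y assume "x \<in> P" "y \<in> P" "(\<Phi> (fst x), \<Phi> (snd x)) = (\<Phi> (fst y), \<Phi> (snd y))"
    then show "x = y" using B(5)[of x] B(5)[of y] inj unfolding inj_on_def by (metis prod.expand prod.inject)
  qed
  have injd: "inj_on (\<lambda>p. (f \<circ> the_inv_into C \<Phi>) (snd p) - (f \<circ> the_inv_into C \<Phi>) (fst p)) ((\<lambda>p. (\<Phi> (fst p), \<Phi> (snd p))) ` P)"
  proof (rule inj_onI)
    fix x y assume x: "x \<in> (\<lambda>p. (\<Phi> (fst p), \<Phi> (snd p))) ` P" and y: "y \<in> (\<lambda>p. (\<Phi> (fst p), \<Phi> (snd p))) ` P"
      and eq: "(f \<circ> the_inv_into C \<Phi>) (snd x) - (f \<circ> the_inv_into C \<Phi>) (fst x) = (f \<circ> the_inv_into C \<Phi>) (snd y) - (f \<circ> the_inv_into C \<Phi>) (fst y)"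
    obtain p where p: "p \<in> P" "x = (\<Phi> (fst p), \<Phi> (snd p))" using x by auto
    obtain p' where p': "p' \<in> P" "y = (\<Phi> (fst p'), \<Phi> (snd p'))" using y by auto
    have "f (snd p) - f (fst p) = f (snd p') - f (fst p')" using eq p p' ti B(5) by auto
    then have "p = p'" using B(6) p p' by (auto simp: inj_on_def)
    then show "x = y" using p p' by simp
  qed
  show ?thesis unfolding lab_def using B(1,4) bij e injd cd by auto
qed

lemma divmod_uniq:
  fixes c s r c' r' :: nat
  assumes "c*s + r = c'*s + r'" "1 \<le> r" "r \<le> s" "1 \<le> r'" "r' \<le> s"
  shows "c = c' \<and> r = r'"
proof -
  have s: "s > 0" using assms by auto
  have d: "\<And>c r0. r0 < s \<Longrightarrow> (c*s + r0) div s = c" using s by simp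
  obtain r0 where r0: "r = Suc r0" using assms(2) by (cases r) auto
  obtain r0' where r0': "r' = Suc r0'" using assms(4) by (cases r') auto
  have eq: "c*s + r0 = c'*s + r0'" using assms(1) r0 r0' by simp
  have "c = c'" using d[of r0 c] d[of r0' c'] eq r0 r0' assms(3,5) by simp
  then show ?thesis using assms by simp
qed

datatype vc = VX | VY | VXC nat | VXL nat nat | VYC nat | VYL nat nat

definition CV :: "nat \<Rightarrow> nat \<Rightarrow> vc set" where
  "CV q t = {VX, VY} \<union> VXC ` {..<q} \<union> (\<lambda>(a,j). VXL a j) ` ({..<q} \<times> {..<t})
     \<union> VYC ` {..<q} \<union> (\<lambda>(a,j). VYL a j) ` ({..<q} \<times> {..<t})"

definition CE :: "nat \<Rightarrow> nat \<Rightarrow> (vc \<times> vc) set" where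
  "CE q t = {(VX,VY)} \<union> (\<lambda>a. (VX, VXC a)) ` {..<q} \<union> (\<lambda>(a,j). (VXL a j, VXC a)) ` ({..<q} \<times> {..<t})
     \<union> (\<lambda>a. (VYC a, VY)) ` {..<q} \<union> (\<lambda>(a,j). (VYC a, VYL a j)) ` ({..<q} \<times> {..<t})"

fun lam :: "nat \<Rightarrow> nat \<Rightarrow> vc \<Rightarrow> nat" where
  "lam q t VX = 0"
| "lam q t VY = q*(t+1) + 1"
| "lam q t (VXC a) = q*(t+1) + 1 + a*(t+1) + (t+1)"
| "lam q t (VXL a j) = (q-a-1)*(t+1) + (j+1)"
| "lam q t (VYC a) = (q-a-1)*(t+1) + (t+1)"
| "lam q t (VYL a j) = q*(t+1) + 1 + a*(t+1) + (j+1)"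

lemma card_CV: "card (CV q t) = 2*q*(t+1) + 2"
proof -
  have i1: "inj_on (\<lambda>(a,j). VXL a j) X" for X by (auto simp: inj_on_def)
  have i2: "inj_on (\<lambda>(a,j). VYL a j) X" for X by (auto simp: inj_on_def)
  have c1: "card ((\<lambda>(a,j). VXL a j) ` ({..<q} \<times> {..<t})) = q*t"
    using card_image[OF i1] by (simp add: card_cartesian_product)
  have c2: "card ((\<lambda>(a,j). VYL a j) ` ({..<q} \<times> {..<t})) = q*t"
    using card_image[OF i2] by (simp add: card_cartesian_product)
  have c3: "card (VXC ` {..<q}) = q" by (subst card_image) (auto simp: inj_on_def)
  have c4: "card (VYC ` {..<q}) = q" by (subst card_image) (auto simp: inj_on_def)
  have "card (CV q t) = card ({VX, VY} \<union> VXC ` {..<q} \<union> (\<lambda>(a,j). VXL a j) ` ({..<q} \<times> {..<t})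
     \<union> VYC ` {..<q}) + q*t"
    unfolding CV_def by (subst card_Un_disjoint) (auto simp: c2)
  also have "\<dots> = card ({VX, VY} \<union> VXC ` {..<q} \<union> (\<lambda>(a,j). VXL a j) ` ({..<q} \<times> {..<t})) + q + q*t"
    by (subst card_Un_disjoint) (auto simp: c4)
  also have "\<dots> = card ({VX, VY} \<union> VXC ` {..<q}) + q*t + q + q*t"
    by (subst card_Un_disjoint) (auto simp: c1)
  also have "\<dots> = 2 + q + q*t + q + q*t"
    by (subst card_Un_disjoint) (auto simp: c3)
  finally show ?thesis by (simp add: algebra_simps)
qed

fun lkey :: "nat \<Rightarrow> nat \<Rightarrow> vc \<Rightarrow> nat \<times> nat" where
  "lkey q t (VXL a j) = (q-a-1, j+1)"
| "lkey q t (VYC a) = (q-a-1, t+1)"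
| "lkey q t (VXC a) = (a, t+1)"
| "lkey q t (VYL a j) = (a, j+1)"
| "lkey q t _ = (0,0)"

definition lowset :: "nat \<Rightarrow> nat \<Rightarrow> vc set" where
  "lowset q t = (\<lambda>(a,j). VXL a j) ` ({..<q} \<times> {..<t}) \<union> VYC ` {..<q}"
definition upset :: "nat \<Rightarrow> nat \<Rightarrow> vc set" where
  "upset q t = VXC ` {..<q} \<union> (\<lambda>(a,j). VYL a j) ` ({..<q} \<times> {..<t})"

lemma CV_split: "CV q t = {VX, VY} \<union> lowset q t \<union> upset q t"
  unfolding CV_def lowset_def upset_def by auto

lemma low_lam: "u \<in> lowset q t \<Longrightarrow> lam q t u = fst (lkey q t u) * (t+1) + snd (lkey q t u)
   \<and> 1 \<le> snd (lkey q t u) \<and> snd (lkey q t u) \<le> t+1 \<and> lam q t u \<le> q*(t+1) \<and> 1 \<le> lam q t u"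
proof -
  assume u: "u \<in> lowset q t"
  have m: "(q-a-1)*(t+1) + (t+1) \<le> q*(t+1)" if aq: "a < q" for a
  proof -
    obtain c where "q = Suc (a + c)" using aq less_iff_Suc_add by auto
    then show ?thesis by (simp add: algebra_simps)
  qed
  from u consider (xl) a j where "u = VXL a j" "a < q" "j < t" | (yc) a where "u = VYC a" "a < q"
    unfolding lowset_def by auto
  then show ?thesis
  proof cases
    case xl
    have "(q-a-1)*(t+1) + (j+1) \<le> (q-a-1)*(t+1) + (t+1)" using xl by simp
    then show ?thesis using xl m[of a] by simp
  next
    case yc
    then show ?thesis using m[of a] by simp
  qed
qed

lemma up_lam: "u \<in> upset q t \<Longrightarrow> lam q t u = q*(t+1) + 1 + fst (lkey q t u) * (t+1) + snd (lkey q t u)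
   \<and> 1 \<le> snd (lkey q t u) \<and> snd (lkey q t u) \<le> t+1"
  unfolding upset_def by auto

lemma lkey_inj_low: "inj_on (lkey q t) (lowset q t)"
  unfolding lowset_def inj_on_def by auto

lemma lkey_inj_up: "inj_on (lkey q t) (upset q t)"
  unfolding upset_def inj_on_def by auto

lemma lam_inj: "inj_on (lam q t) (CV q t)"
proof (rule inj_onI)
  fix u v assume u: "u \<in> CV q t" and v: "v \<in> CV q t" and eq: "lam q t u = lam q t v"
  have cls: "\<And>w. w \<in> CV q t \<Longrightarrow> w = VX \<or> w = VY \<or> w \<in> lowset q t \<or> w \<in> upset q t"
    using CV_split by blast
  have lowpos: "\<And>w. w \<in> lowset q t \<Longrightarrow> 1 \<le> lam q t w \<and> lam q t w \<le> q*(t+1)" using low_lam by blast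
  have upbig: "\<And>w. w \<in> upset q t \<Longrightarrow> q*(t+1) + 1 < lam q t w" using up_lam by fastforce
  have lowlow: "\<And>w w'. w \<in> lowset q t \<Longrightarrow> w' \<in> lowset q t \<Longrightarrow> lam q t w = lam q t w' \<Longrightarrow> w = w'"
  proof -
    fix w w' assume w: "w \<in> lowset q t" and w': "w' \<in> lowset q t" and e: "lam q t w = lam q t w'"
    have "lkey q t w = lkey q t w'"
      using divmod_uniq[of "fst (lkey q t w)" "t+1" "snd (lkey q t w)" "fst (lkey q t w')" "snd (lkey q t w')"]
        low_lam[OF w] low_lam[OF w'] e by (simp add: prod_eq_iff)
    then show "w = w'" using lkey_inj_low w w' by (meson inj_onD)
  qed
  have upup: "\<And>w w'. w \<in> upset q t \<Longrightarrow> w' \<in> upset q t \<Longrightarrow> lam q t w = lam q t w' \<Longrightarrow> w = w'"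
  proof -
    fix w w' assume w: "w \<in> upset q t" and w': "w' \<in> upset q t" and e: "lam q t w = lam q t w'"
    have "lkey q t w = lkey q t w'"
      using divmod_uniq[of "fst (lkey q t w)" "t+1" "snd (lkey q t w)" "fst (lkey q t w')" "snd (lkey q t w')"]
        up_lam[OF w] up_lam[OF w'] e by (simp add: prod_eq_iff)
    then show "w = w'" using lkey_inj_up w w' by (meson inj_onD)
  qed
  show "u = v"
    using cls[OF u] cls[OF v] eq lowpos upbig lowlow upup
    by (elim disjE) (auto dest: lowpos upbig, (metis less_not_refl not_add_less1 lowpos upbig le_trans less_imp_le_nat not_less_eq_eq)+)
qed

fun ekey :: "nat \<Rightarrow> nat \<Rightarrow> vc \<times> vc \<Rightarrow> nat \<times> nat" where
  "ekey q t (VX, VY) = (q, 1)"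
| "ekey q t (VX, VXC a) = (q+a+1, 1)"
| "ekey q t (VXL a j, VXC b) = (2*a+1, t+1-j)"
| "ekey q t (VYC a, VY) = (a, 1)"
| "ekey q t (VYC a, VYL b j) = (2*a, j+2)"
| "ekey q t _ = (0,0)"

lemma ekey_inj: "inj_on (ekey q t) (CE q t)"
  unfolding CE_def inj_on_def by auto presburger+

lemma edge_prop:
  assumes e: "e \<in> CE q t"
  shows "fst e \<in> CV q t \<and> snd e \<in> CV q t \<and> lam q t (fst e) \<le> q*(t+1) \<and> q*(t+1) < lam q t (snd e) \<and>
    lam q t (snd e) - lam q t (fst e) = fst (ekey q t e) * (t+1) + snd (ekey q t e) \<and>
    1 \<le> snd (ekey q t e) \<and> snd (ekey q t e) \<le> t+1"
proof -
  from e consider (xy) "e = (VX,VY)" | (xc) a where "e = (VX, VXC a)" "a < q"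
    | (xl) a j where "e = (VXL a j, VXC a)" "a < q" "j < t"
    | (yc) a where "e = (VYC a, VY)" "a < q"
    | (yl) a j where "e = (VYC a, VYL a j)" "a < q" "j < t"
    unfolding CE_def by auto
  then show ?thesis
  proof cases
    case xy
    then show ?thesis unfolding CV_def by simp
  next
    case xc
    then show ?thesis unfolding CV_def by (simp add: algebra_simps)
  next
    case xl
    obtain c where c: "q = Suc (a + c)" using xl(2) less_iff_Suc_add by auto
    obtain d where d: "t = Suc (j + d)" using xl(3) less_iff_Suc_add by auto
    have mem: "fst e \<in> CV q t \<and> snd e \<in> CV q t" using xl unfolding CV_def by auto
    show ?thesis using mem xl(1) unfolding c d by (simp add: algebra_simps)
  next
    case yc
    obtain c where c: "q = Suc (a + c)" using yc(2) less_iff_Suc_add by auto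
    have mem: "fst e \<in> CV q t \<and> snd e \<in> CV q t" using yc unfolding CV_def by auto
    show ?thesis using mem yc(1) unfolding c by (simp add: algebra_simps)
  next
    case yl
    obtain c where c: "q = Suc (a + c)" using yl(2) less_iff_Suc_add by auto
    obtain d where d: "t = Suc (j + d)" using yl(3) less_iff_Suc_add by auto
    have mem: "fst e \<in> CV q t \<and> snd e \<in> CV q t" using yl unfolding CV_def by auto
    show ?thesis using mem yl(1) unfolding c d by (simp add: algebra_simps)
  qed
qed

lemma core_lab: "lab (CV q t) (CE q t) (lam q t) (q*(t+1))"
proof -
  have fin: "finite (CV q t)" unfolding CV_def by auto
  have img: "lam q t ` CV q t \<subseteq> {0..2*q*(t+1)+1}"
  proof
    fix y assume "y \<in> lam q t ` CV q t"
    then obtain u where u: "u \<in> CV q t" "y = lam q t u" by (meson imageE)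
    have "lam q t u \<le> 2*q*(t+1)+1"
    proof -
      consider "u = VX" | "u = VY" | "u \<in> lowset q t" | "u \<in> upset q t" using u CV_split by blast
      then show ?thesis
      proof cases
        case 3 then show ?thesis using low_lam[OF 3] by linarith
      next
        case 4
        then obtain a where a: "a < q" "fst (lkey q t u) = a" unfolding upset_def by auto
        have "a*(t+1) + (t+1) \<le> q*(t+1)" using a
          by (metis Suc_leI add.commute mult_Suc mult_le_mono1)
        then show ?thesis using up_lam[OF 4] a by simp
      qed auto
    qed
    then show "y \<in> {0..2*q*(t+1)+1}" using u by simp
  qed
  have bij: "bij_betw (lam q t) (CV q t) {0..card (CV q t) - 1}"
    by (rule bij_by_inj[OF lam_inj]) (use img in \<open>auto simp: card_CV\<close>)
  have injd: "inj_on (\<lambda>p. lam q t (snd p) - lam q t (fst p)) (CE q t)"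
  proof (rule inj_onI)
    fix e e' assume e: "e \<in> CE q t" and e': "e' \<in> CE q t"
      and eq: "lam q t (snd e) - lam q t (fst e) = lam q t (snd e') - lam q t (fst e')"
    have "ekey q t e = ekey q t e'"
      using divmod_uniq[of "fst (ekey q t e)" "t+1" "snd (ekey q t e)" "fst (ekey q t e')" "snd (ekey q t e')"]
        edge_prop[OF e] edge_prop[OF e'] eq by (simp add: prod_eq_iff)
    then show "e = e'" using ekey_inj e e' by (meson inj_onD)
  qed
  show ?thesis unfolding lab_def using fin bij injd edge_prop by (auto simp: card_CV)
qed

locale lob =
  fixes V :: "'a set" and E :: "'a set set" and r :: nat and v :: "nat \<Rightarrow> 'a" and F :: "nat \<Rightarrow> 'a set"
  assumes desc: "lobster_description V E r v F"
begin

abbreviation N where "N i \<equiv> lobe_nbrs E v F i"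
definition W where "W i = F i - ({v i} \<union> N i)"
definition par0 where "par0 i w = (SOME u. u \<in> N i \<and> {u,w} \<in> E)"

lemmas D = desc[unfolded lobster_description_def]
lemma tree: "is_tree V E" using D by (rule conjunct1)
lemma vinj: "inj_on v {1..r}" using D[THEN conjunct2] by (rule conjunct1)
lemma spine': "\<forall>i\<in>{1..<r}. {v i, v (Suc i)} \<in> E" using D[THEN conjunct2, THEN conjunct2] by (rule conjunct1)
lemma vF': "\<forall>i\<in>{1..r}. v i \<in> F i \<and> F i \<inter> v ` {1..r} = {v i}"
  using D[THEN conjunct2, THEN conjunct2, THEN conjunct2] by (rule conjunct1)
lemma disj': "\<forall>i\<in>{1..r}. \<forall>j\<in>{1..r}. i \<noteq> j \<longrightarrow> F i \<inter> F j = {}"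
  using D[THEN conjunct2, THEN conjunct2, THEN conjunct2, THEN conjunct2] by (rule conjunct1)
lemma Vdef: "V = (\<Union>i\<in>{1..r}. F i)"
  using D[THEN conjunct2, THEN conjunct2, THEN conjunct2, THEN conjunct2, THEN conjunct2] by (rule conjunct1)
lemma Edef: "E = {{v i, v (Suc i)} | i. 1 \<le> i \<and> i < r} \<union> (\<Union>i\<in>{1..r}. {e \<in> E. e \<subseteq> F i})"
  using D[THEN conjunct2, THEN conjunct2, THEN conjunct2, THEN conjunct2, THEN conjunct2, THEN conjunct2] by (rule conjunct1)
lemma lobe': "\<forall>i\<in>{1..r}.
        (\<forall>e\<in>E. e \<subseteq> F i \<longrightarrow>
           (\<exists>u\<in>N i. e = {v i, u}) \<or>
           (\<exists>u\<in>N i. \<exists>w\<in>F i - ({v i} \<union> N i). e = {u, w})) \<and>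
        (\<forall>w\<in>F i - ({v i} \<union> N i). \<exists>u\<in>N i. {u, w} \<in> E)"
  using D[THEN conjunct2, THEN conjunct2, THEN conjunct2, THEN conjunct2, THEN conjunct2, THEN conjunct2] by (rule conjunct2)

lemma finV: "finite V" using tree unfolding is_tree_def simple_graph_def by blast
lemma edges: "\<And>e. e \<in> E \<Longrightarrow> e \<subseteq> V \<and> card e = 2" using tree unfolding is_tree_def simple_graph_def by blast
lemma cardE: "card E = card V - 1" using tree unfolding is_tree_def by blast
lemma Vne: "V \<noteq> {}" using tree unfolding is_tree_def by blast
lemma spine: "\<And>i. i \<in> {1..<r} \<Longrightarrow> {v i, v (Suc i)} \<in> E" using spine' by blast
lemma vF: "\<And>i. i \<in> {1..r} \<Longrightarrow> v i \<in> F i" using vF' by blast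
lemma Fv: "\<And>i. i \<in> {1..r} \<Longrightarrow> F i \<inter> v ` {1..r} = {v i}" using vF' by blast
lemma disj: "\<And>i j. i \<in> {1..r} \<Longrightarrow> j \<in> {1..r} \<Longrightarrow> i \<noteq> j \<Longrightarrow> F i \<inter> F j = {}" using disj' by blast
lemma lobeE: "\<And>i e. i \<in> {1..r} \<Longrightarrow> e \<in> E \<Longrightarrow> e \<subseteq> F i \<Longrightarrow>
           (\<exists>u\<in>N i. e = {v i, u}) \<or> (\<exists>u\<in>N i. \<exists>w\<in>F i - ({v i} \<union> N i). e = {u, w})"
  using lobe' by blast
lemma lobeW: "\<And>i w. i \<in> {1..r} \<Longrightarrow> w \<in> F i - ({v i} \<union> N i) \<Longrightarrow> \<exists>u\<in>N i. {u, w} \<in> E"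
  using lobe' by blast

lemma finE: "finite E"
proof -
  have "E \<subseteq> Pow V" using edges by auto
  then show ?thesis using finV by (meson finite_Pow_iff rev_finite_subset)
qed

lemma edge_ne: "{a,b} \<in> E \<Longrightarrow> a \<noteq> b"
  using edges[of "{a,b}"] by auto

lemma FV: "i \<in> {1..r} \<Longrightarrow> F i \<subseteq> V" using Vdef by auto

lemma finF: "i \<in> {1..r} \<Longrightarrow> finite (F i)" using FV finV by (meson rev_finite_subset)

lemma vN: "v i \<notin> N i" unfolding lobe_nbrs_def using edges[of "{v i}"] by auto

lemma NF: "N i \<subseteq> F i" unfolding lobe_nbrs_def by auto

lemma W_alt: "W i = F i - ({v i} \<union> N i)" by (rule W_def)

lemma par0: "i \<in> {1..r} \<Longrightarrow> w \<in> W i \<Longrightarrow> par0 i w \<in> N i \<and> {par0 i w, w} \<in> E"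
  unfolding par0_def W_def using lobeW[of i w] by (metis (mono_tags, lifting) someI_ex)

lemma F_uniq: "i \<in> {1..r} \<Longrightarrow> j \<in> {1..r} \<Longrightarrow> z \<in> F i \<Longrightarrow> z \<in> F j \<Longrightarrow> i = j"
  using disj by blast

lemma vF_uniq: "i \<in> {1..r} \<Longrightarrow> j \<in> {1..r} \<Longrightarrow> v j \<in> F i \<Longrightarrow> i = j"
proof -
  assume i: "i \<in> {1..r}" and j: "j \<in> {1..r}" and vj: "v j \<in> F i"
  then have "v j = v i" using Fv[OF i] by auto
  then show "i = j" using vinj i j by (metis inj_onD)
qed

definition idx where "idx z = (THE i. i \<in> {1..r} \<and> z \<in> F i)"

lemma idx_eq: "i \<in> {1..r} \<Longrightarrow> z \<in> F i \<Longrightarrow> idx z = i"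
  unfolding idx_def using F_uniq by blast

lemma idx_V: "z \<in> V \<Longrightarrow> idx z \<in> {1..r} \<and> z \<in> F (idx z)"
proof -
  assume "z \<in> V"
  then obtain i where "i \<in> {1..r}" "z \<in> F i" using Vdef by auto
  then show ?thesis using idx_eq by auto
qed

definition par where
  "par z = (let i = idx z in if z = v i then v (i - 1) else if z \<in> N i then v i else par0 i z)"
definition mu where
  "mu z = (let i = idx z in if z = v i then i else if z \<in> N i then r+1 else r+2)"

lemma par_props: assumes z: "z \<in> V" "z \<noteq> v 1"
  shows "{par z, z} \<in> E \<and> mu (par z) < mu z"
proof -
  define i where "i = idx z"
  have i: "i \<in> {1..r}" "z \<in> F i" using idx_V[OF z(1)] i_def by auto
  show ?thesis
  proof (cases "z = v i")
    case True
    then have "i \<noteq> 1" using z(2) by auto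
    then have i1: "i - 1 \<in> {1..<r}" "i - 1 \<in> {1..r}" "Suc (i - 1) = i" using i by auto
    have p: "par z = v (i - 1)" unfolding par_def Let_def i_def[symmetric] using True by simp
    have e: "{par z, z} \<in> E" using spine[OF i1(1)] p True i1(3) by simp
    have "idx (v (i - 1)) = i - 1" using idx_eq[OF i1(2) vF[OF i1(2)]] .
    then have "mu (par z) = i - 1" unfolding p mu_def Let_def by simp
    moreover have "mu z = i" unfolding mu_def Let_def i_def[symmetric] using True by simp
    ultimately show ?thesis using e \<open>i \<noteq> 1\<close> i by auto
  next
    case False
    note nv = False
    show ?thesis
    proof (cases "z \<in> N i")
      case True
      have p: "par z = v i" unfolding par_def Let_def i_def[symmetric] using True nv by simp
      have e: "{par z, z} \<in> E" using True p unfolding lobe_nbrs_def by auto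
      have "mu (par z) = i" unfolding p mu_def Let_def using idx_eq[OF i(1) vF[OF i(1)]] by simp
      moreover have "mu z = r+1" unfolding mu_def Let_def i_def[symmetric] using True nv by simp
      ultimately show ?thesis using e i by auto
    next
      case False
      have w: "z \<in> W i" unfolding W_def using i False nv by auto
      have p: "par z = par0 i z" unfolding par_def Let_def i_def[symmetric] using False nv by simp
      have pp: "par0 i z \<in> N i" "{par0 i z, z} \<in> E" using par0[OF i(1) w] by auto
      have ix: "idx (par0 i z) = i" using idx_eq[OF i(1)] pp(1) NF by auto
      have "par0 i z \<noteq> v i" using pp(1) vN by auto
      then have "mu (par z) = r+1" unfolding p mu_def Let_def ix using pp(1) by simp
      moreover have "mu z = r+2" unfolding mu_def Let_def i_def[symmetric] using False nv by simp
      ultimately show ?thesis using pp p by auto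
    qed
  qed
qed

lemma E_par: "E = (\<lambda>z. {par z, z}) ` (V - {v 1})"
proof -
  have sub: "(\<lambda>z. {par z, z}) ` (V - {v 1}) \<subseteq> E" using par_props by auto
  have inj: "inj_on (\<lambda>z. {par z, z}) (V - {v 1})"
  proof (rule inj_onI)
    fix z z' assume z: "z \<in> V - {v 1}" and z': "z' \<in> V - {v 1}" and eq: "{par z, z} = {par z', z'}"
    show "z = z'"
    proof (rule ccontr)
      assume ne: "z \<noteq> z'"
      then have "z = par z'" "z' = par z" using eq by (auto simp: doubleton_eq_iff)
      then show False using par_props[of z] par_props[of z'] z z' by auto
    qed
  qed
  have "card ((\<lambda>z. {par z, z}) ` (V - {v 1})) = card V - 1"
  proof -
    have "v 1 \<in> V"
    proof -
      have "r \<noteq> 0" using Vne Vdef by auto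
      then show ?thesis using vF[of 1] Vdef by auto
    qed
    then show ?thesis using card_image[OF inj] finV by simp
  qed
  then show ?thesis using card_subset_eq[OF finE sub] cardE by simp
qed

lemma T: assumes i: "i \<in> {1..r}" and u: "u \<in> N i" and w: "w \<in> W i" and e: "{u,w} \<in> E"
  shows "par0 i w = u"
proof -
  obtain z where z: "z \<in> V - {v 1}" "{u,w} = {par z, z}" using e E_par by auto
  have uF: "u \<in> F i" and wF: "w \<in> F i" using u w NF unfolding W_def by auto
  have uw: "u \<noteq> w" using edge_ne[OF e] .
  have zz: "z = u \<or> z = w" using z(2) by (auto simp: doubleton_eq_iff)
  show ?thesis
  proof (cases "z = u")
    case True
    have "u \<noteq> v i" using u vN by auto
    then have "par u = v i" unfolding par_def Let_def idx_eq[OF i uF] using u by simp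
    then have "w = v i" using z(2) True uw by (auto simp: doubleton_eq_iff)
    then show ?thesis using w unfolding W_def by auto
  next
    case False
    then have zw: "z = w" using zz by auto
    have "w \<noteq> v i" "w \<notin> N i" using w unfolding W_def by auto
    then have "par w = par0 i w" unfolding par_def Let_def idx_eq[OF i wF] by simp
    then show ?thesis using z(2) zw uw by (auto simp: doubleton_eq_iff)
  qed
qed

end

context lob begin

abbreviation LV where "LV i u \<equiv> lobe_leaves E v F i u"
abbreviation NP where "NP i \<equiv> nonpendant E v F i"

lemma NP_N: "NP i \<subseteq> N i" unfolding nonpendant_def by auto

lemma NW: "N i \<inter> W i = {}" unfolding W_def by auto
lemma vW: "v i \<notin> W i" unfolding W_def by auto
lemma WF: "W i \<subseteq> F i" unfolding W_def by auto
lemma F_decomp: "i \<in> {1..r} \<Longrightarrow> F i = {v i} \<union> N i \<union> W i"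
  unfolding W_def using vF NF by auto

lemma LV_eq: assumes i: "i \<in> {1..r}" and u: "u \<in> N i"
  shows "LV i u = {w \<in> W i. par0 i w = u}"
proof
  show "LV i u \<subseteq> {w \<in> W i. par0 i w = u}"
  proof
    fix w assume w: "w \<in> LV i u"
    then have wF: "w \<in> F i" and e: "{u,w} \<in> E" and wv: "w \<noteq> v i" unfolding lobe_leaves_def by auto
    have uF: "u \<in> F i" using u NF by auto
    have "{u,w} \<subseteq> F i" using uF wF by auto
    from lobeE[OF i e this] have "w \<in> W i"
    proof
      assume "\<exists>u'\<in>N i. {u, w} = {v i, u'}"
      then show ?thesis using wv u vN by (auto simp: doubleton_eq_iff)
    next
      assume "\<exists>u'\<in>N i. \<exists>w'\<in>F i - ({v i} \<union> N i). {u, w} = {u', w'}"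
      then obtain u' w' where "u' \<in> N i" "w' \<in> F i - ({v i} \<union> N i)" "{u,w} = {u',w'}" by blast
      then show ?thesis using u unfolding W_def by (auto simp: doubleton_eq_iff)
    qed
    moreover have "par0 i w = u" using T[OF i u _ e] \<open>w \<in> W i\<close> .
    ultimately show "w \<in> {w \<in> W i. par0 i w = u}" by simp
  qed
next
  show "{w \<in> W i. par0 i w = u} \<subseteq> LV i u"
  proof
    fix w assume "w \<in> {w \<in> W i. par0 i w = u}"
    then have w: "w \<in> W i" "par0 i w = u" by auto
    have "{par0 i w, w} \<in> E" using par0[OF i w(1)] by auto
    then show "w \<in> LV i u" using w unfolding lobe_leaves_def W_def by auto
  qed
qed

lemma W_cover: assumes i: "i \<in> {1..r}" and w: "w \<in> W i"
  shows "par0 i w \<in> NP i \<and> w \<in> LV i (par0 i w)"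
proof -
  have p: "par0 i w \<in> N i" using par0[OF i w] by auto
  have "w \<in> LV i (par0 i w)" using LV_eq[OF i p] w by auto
  then show ?thesis using p unfolding nonpendant_def by auto
qed

lemma finN: "i \<in> {1..r} \<Longrightarrow> finite (N i)" using NF finF by (meson rev_finite_subset)
lemma finNP: "i \<in> {1..r} \<Longrightarrow> finite (NP i)" using NP_N finN by (meson rev_finite_subset)
lemma finLV: "i \<in> {1..r} \<Longrightarrow> finite (LV i u)"
  unfolding lobe_leaves_def using finF by auto

lemma side_enum:
  assumes i: "i \<in> {1..r}" and q: "card (NP i) = q" and t: "\<forall>u\<in>NP i. card (LV i u) = t"
  shows "\<exists>e l. bij_betw e {..<q} (NP i) \<and> (\<forall>u\<in>NP i. bij_betw (l u) {..<t} (LV i u))"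
proof -
  obtain e where e: "bij_betw e {0..<card (NP i)} (NP i)" using ex_bij_betw_nat_finite finNP[OF i] by blast
  have ex: "\<forall>u\<in>NP i. \<exists>h. bij_betw h {..<t} (LV i u)"
  proof
    fix u assume u: "u \<in> NP i"
    obtain h where "bij_betw h {0..<card (LV i u)} (LV i u)" using ex_bij_betw_nat_finite finLV[OF i] by blast
    then show "\<exists>h. bij_betw h {..<t} (LV i u)" using t u by (auto simp: atLeast0LessThan)
  qed
  define l where "l u = (SOME h. bij_betw h {..<t} (LV i u))" for u
  have "\<forall>u\<in>NP i. bij_betw (l u) {..<t} (LV i u)" using ex unfolding l_def by (metis (mono_tags, lifting) someI_ex)
  then show ?thesis using e q by (auto simp: atLeast0LessThan)
qed

lemma side_facts:
  assumes i: "i \<in> {1..r}" and e: "bij_betw e {..<q} (NP i)"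
    and l: "\<forall>u\<in>NP i. bij_betw (l u) {..<t} (LV i u)"
  shows "\<And>a. a < q \<Longrightarrow> e a \<in> NP i"
    and "\<And>a j. a < q \<Longrightarrow> j < t \<Longrightarrow> l (e a) j \<in> W i \<and> par0 i (l (e a) j) = e a"
    and "\<And>w. w \<in> W i \<Longrightarrow> \<exists>a<q. \<exists>j<t. w = l (e a) j"
    and "\<And>u. u \<in> NP i \<Longrightarrow> \<exists>a<q. u = e a"
    and "\<And>a. a < q \<Longrightarrow> the_inv_into {..<q} e (e a) = a"
    and "\<And>a j. a < q \<Longrightarrow> j < t \<Longrightarrow> the_inv_into {..<t} (l (e a)) (l (e a) j) = j"
    and "\<And>u w. u \<in> NP i \<Longrightarrow> w \<in> LV i u \<Longrightarrow> \<exists>a<q. \<exists>j<t. u = e a \<and> w = l (e a) j"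
proof -
  show e1: "\<And>a. a < q \<Longrightarrow> e a \<in> NP i" using e unfolding bij_betw_def by auto
  show e2: "\<And>a j. a < q \<Longrightarrow> j < t \<Longrightarrow> l (e a) j \<in> W i \<and> par0 i (l (e a) j) = e a"
  proof -
    fix a j assume a: "a < q" and j: "j < t"
    have u: "e a \<in> NP i" using e1[OF a] .
    have "l (e a) j \<in> LV i (e a)" using l u j unfolding bij_betw_def by auto
    then show "l (e a) j \<in> W i \<and> par0 i (l (e a) j) = e a" using LV_eq[OF i] u NP_N by auto
  qed
  show e4: "\<And>u. u \<in> NP i \<Longrightarrow> \<exists>a<q. u = e a" using e unfolding bij_betw_def by auto
  show e7: "\<And>u w. u \<in> NP i \<Longrightarrow> w \<in> LV i u \<Longrightarrow> \<exists>a<q. \<exists>j<t. u = e a \<and> w = l (e a) j"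
  proof -
    fix u w assume u: "u \<in> NP i" and w: "w \<in> LV i u"
    obtain a where a: "a < q" "u = e a" using e4[OF u] by auto
    obtain j where "j < t" "w = l u j" using l u w unfolding bij_betw_def by auto
    then show "\<exists>a<q. \<exists>j<t. u = e a \<and> w = l (e a) j" using a by auto
  qed
  show "\<And>w. w \<in> W i \<Longrightarrow> \<exists>a<q. \<exists>j<t. w = l (e a) j"
    using W_cover[OF i] e7 by blast
  show "\<And>a. a < q \<Longrightarrow> the_inv_into {..<q} e (e a) = a"
    using e unfolding bij_betw_def by (simp add: the_inv_into_f_f)
  show "\<And>a j. a < q \<Longrightarrow> j < t \<Longrightarrow> the_inv_into {..<t} (l (e a)) (l (e a) j) = j"
    using l e1 unfolding bij_betw_def by (simp add: the_inv_into_f_f)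
qed

end

context lob begin

lemma block:
  assumes i: "i \<in> {1..<r}" and q1: "card (NP i) = q" and q2: "card (NP (Suc i)) = q"
    and t1: "\<forall>u\<in>NP i. card (LV i u) = t" and t2: "\<forall>u\<in>NP (Suc i). card (LV (Suc i) u) = t"
  shows "\<exists>P f k. lab (F i \<union> F (Suc i)) P f k \<and> f (v i) = 0 \<and> f (v (Suc i)) = k+1 \<and>
     (\<forall>e\<in>E. (e \<subseteq> F i \<or> e \<subseteq> F (Suc i) \<or> e = {v i, v (Suc i)}) \<longrightarrow> e \<in> (\<lambda>p. {fst p, snd p}) ` P)"
proof -
  define i' where "i' = Suc i"
  have ii: "i \<in> {1..r}" "i' \<in> {1..r}" "i \<noteq> i'" using i i'_def by auto
  have Fd: "F i \<inter> F i' = {}" using disj[OF ii] .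
  obtain ex lx where ex: "bij_betw ex {..<q} (NP i)" and lx: "\<forall>u\<in>NP i. bij_betw (lx u) {..<t} (LV i u)"
    using side_enum[OF ii(1) q1 t1] by blast
  obtain ey ly where ey: "bij_betw ey {..<q} (NP i')" and ly: "\<forall>u\<in>NP i'. bij_betw (ly u) {..<t} (LV i' u)"
    using side_enum[OF ii(2) q2[folded i'_def] t2[folded i'_def]] by blast
  note sx = side_facts[OF ii(1) ex lx]
  note sy = side_facts[OF ii(2) ey ly]
  have vi: "v i \<in> F i" and vi': "v i' \<in> F i'" using vF ii by auto
  have NPF: "NP i \<subseteq> F i" "NP i' \<subseteq> F i'" using NP_N NF by (meson order_trans)+
  have WF2: "W i \<subseteq> F i" "W i' \<subseteq> F i'" using WF by auto
  define \<Phi> where "\<Phi> c = (case c of VX \<Rightarrow> v i | VY \<Rightarrow> v i' | VXC a \<Rightarrow> ex a | VXL a j \<Rightarrow> lx (ex a) j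
     | VYC a \<Rightarrow> ey a | VYL a j \<Rightarrow> ly (ey a) j)" for c
  define dec where "dec z = (if z = v i then VX else if z = v i' then VY
     else if z \<in> NP i then VXC (the_inv_into {..<q} ex z)
     else if z \<in> W i then VXL (the_inv_into {..<q} ex (par0 i z)) (the_inv_into {..<t} (lx (par0 i z)) z)
     else if z \<in> NP i' then VYC (the_inv_into {..<q} ey z)
     else VYL (the_inv_into {..<q} ey (par0 i' z)) (the_inv_into {..<t} (ly (par0 i' z)) z))" for z
  have vv: "v i \<noteq> v i'" using vi vi' Fd by auto
  have NWi: "N i \<inter> W i = {}" "N i' \<inter> W i' = {}" using NW by auto
  have NPNi: "NP i \<subseteq> N i" "NP i' \<subseteq> N i'" using NP_N by auto
  have vNi: "v i \<notin> N i" "v i' \<notin> N i'" using vN by auto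
  have vWi: "v i \<notin> W i" "v i' \<notin> W i'" using vW by auto
  have NFi: "N i \<subseteq> F i" "N i' \<subseteq> F i'" using NF by auto
  have decPhi: "dec (\<Phi> c) = c" if c: "c \<in> CV q t" for c
  proof -
    from c consider "c = VX" | "c = VY" | (xc) a where "c = VXC a" "a < q"
      | (xl) a j where "c = VXL a j" "a < q" "j < t" | (yc) a where "c = VYC a" "a < q"
      | (yl) a j where "c = VYL a j" "a < q" "j < t" unfolding CV_def by auto
    then show ?thesis
    proof cases
      case 1 then show ?thesis unfolding \<Phi>_def dec_def by simp
    next
      case 2 then show ?thesis unfolding \<Phi>_def dec_def using vv by simp
    next
      case xc
      have "ex a \<in> NP i" using sx(1) xc by auto
      moreover then have "ex a \<noteq> v i" "ex a \<noteq> v i'" using NPNi vNi NPF vi' Fd by auto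
      ultimately show ?thesis unfolding \<Phi>_def dec_def using xc sx(5) by simp
    next
      case xl
      have w: "lx (ex a) j \<in> W i" "par0 i (lx (ex a) j) = ex a" using sx(2) xl by auto
      then have "lx (ex a) j \<noteq> v i" "lx (ex a) j \<noteq> v i'" "lx (ex a) j \<notin> NP i"
        using vWi WF2 vi' Fd NWi NPNi by auto
      then show ?thesis unfolding \<Phi>_def dec_def using xl w sx(5,6) by simp
    next
      case yc
      have "ey a \<in> NP i'" using sy(1) yc by auto
      moreover then have "ey a \<noteq> v i" "ey a \<noteq> v i'" "ey a \<notin> NP i" "ey a \<notin> W i"
        using NPNi vNi NPF WF2 vi Fd by auto
      ultimately show ?thesis unfolding \<Phi>_def dec_def using yc sy(5) by simp
    next
      case yl
      have w: "ly (ey a) j \<in> W i'" "par0 i' (ly (ey a) j) = ey a" using sy(2) yl by auto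
      then have "ly (ey a) j \<noteq> v i" "ly (ey a) j \<noteq> v i'" "ly (ey a) j \<notin> NP i" "ly (ey a) j \<notin> W i"
        "ly (ey a) j \<notin> NP i'"
        using vWi WF2 vi NPF Fd NWi NPNi by auto
      then show ?thesis unfolding \<Phi>_def dec_def using yl w sy(5,6) by simp
    qed
  qed
  have injPhi: "inj_on \<Phi> (CV q t)" using decPhi by (metis inj_on_inverseI)
  define Vc where "Vc = \<Phi> ` CV q t"
  define Pc where "Pc = (\<lambda>p. (\<Phi> (fst p), \<Phi> (snd p))) ` CE q t"
  define f0 where "f0 = lam q t \<circ> the_inv_into (CV q t) \<Phi>"
  have labc: "lab Vc Pc f0 (q*(t+1))" unfolding Vc_def Pc_def f0_def by (rule transport[OF core_lab injPhi])
  have VX: "VX \<in> CV q t" and VY: "VY \<in> CV q t" unfolding CV_def by auto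
  have f0x: "f0 (v i) = 0" using the_inv_into_f_f[OF injPhi VX] unfolding f0_def \<Phi>_def by simp
  have f0y: "f0 (v i') = q*(t+1) + 1" using the_inv_into_f_f[OF injPhi VY] unfolding f0_def \<Phi>_def by simp
  have VcE: "Vc = {v i, v i'} \<union> NP i \<union> W i \<union> NP i' \<union> W i'"
  proof
    show "Vc \<subseteq> {v i, v i'} \<union> NP i \<union> W i \<union> NP i' \<union> W i'"
      unfolding Vc_def CV_def \<Phi>_def using sx(1,2) sy(1,2) by auto
  next
    show "{v i, v i'} \<union> NP i \<union> W i \<union> NP i' \<union> W i' \<subseteq> Vc"
    proof
      fix z assume z: "z \<in> {v i, v i'} \<union> NP i \<union> W i \<union> NP i' \<union> W i'"
      then consider "z = v i" | "z = v i'" | "z \<in> NP i" | "z \<in> W i" | "z \<in> NP i'" | "z \<in> W i'" by auto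
      then show "z \<in> Vc"
      proof cases
        case 1 then show ?thesis unfolding Vc_def by (intro image_eqI[where x=VX]) (auto simp: \<Phi>_def CV_def)
      next
        case 2 then show ?thesis unfolding Vc_def by (intro image_eqI[where x=VY]) (auto simp: \<Phi>_def CV_def)
      next
        case 3 then obtain a where "a < q" "z = ex a" using sx(4) by blast
        then show ?thesis unfolding Vc_def by (intro image_eqI[where x="VXC a"]) (auto simp: \<Phi>_def CV_def)
      next
        case 4 then obtain a j where "a < q" "j < t" "z = lx (ex a) j" using sx(3) by blast
        then show ?thesis unfolding Vc_def by (intro image_eqI[where x="VXL a j"]) (auto simp: \<Phi>_def CV_def)
      next
        case 5 then obtain a where "a < q" "z = ey a" using sy(4) by blast
        then show ?thesis unfolding Vc_def by (intro image_eqI[where x="VYC a"]) (auto simp: \<Phi>_def CV_def)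
      next
        case 6 then obtain a j where "a < q" "j < t" "z = ly (ey a) j" using sy(3) by blast
        then show ?thesis unfolding Vc_def by (intro image_eqI[where x="VYL a j"]) (auto simp: \<Phi>_def CV_def)
      qed
    qed
  qed
  have Pc1: "(v i, v i') \<in> Pc" unfolding Pc_def by (intro image_eqI[where x="(VX,VY)"]) (auto simp: \<Phi>_def CE_def)
  have Pc2: "(v i, ex a) \<in> Pc" if "a < q" for a
    unfolding Pc_def using that by (intro image_eqI[where x="(VX,VXC a)"]) (auto simp: \<Phi>_def CE_def)
  have Pc3: "(lx (ex a) j, ex a) \<in> Pc" if "a < q" "j < t" for a j
    unfolding Pc_def using that by (intro image_eqI[where x="(VXL a j,VXC a)"]) (auto simp: \<Phi>_def CE_def)
  have Pc4: "(ey a, v i') \<in> Pc" if "a < q" for a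
    unfolding Pc_def using that by (intro image_eqI[where x="(VYC a,VY)"]) (auto simp: \<Phi>_def CE_def)
  have Pc5: "(ey a, ly (ey a) j) \<in> Pc" if "a < q" "j < t" for a j
    unfolding Pc_def using that by (intro image_eqI[where x="(VYC a,VYL a j)"]) (auto simp: \<Phi>_def CE_def)
  define S where "S = N i' - NP i'"
  define S' where "S' = N i - NP i"
  have finS: "finite S" "finite S'" unfolding S_def S'_def using finN ii by auto
  have SVc: "S \<inter> Vc = {}"
  proof -
    { fix z assume z: "z \<in> S" "z \<in> Vc"
      then have zN: "z \<in> N i'" "z \<notin> NP i'" unfolding S_def by auto
      then have zF: "z \<in> F i'" using NFi by auto
      then have "z \<notin> F i" using Fd by auto
      then have "z \<noteq> v i" "z \<notin> NP i" "z \<notin> W i" using vi NPF WF2 by auto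
      moreover have "z \<noteq> v i'" using zN vNi by auto
      moreover have "z \<notin> W i'" using zN NWi by auto
      ultimately have False using z(2) zN unfolding VcE by auto }
    then show ?thesis by auto
  qed
  have yVc: "v i' \<in> Vc" "v i \<in> Vc" unfolding VcE by auto
  obtain g k' where g: "lab (Vc \<union> S) (Pc \<union> (\<lambda>z. (z, v i')) ` S) g k'" "g (v i') = k'+1"
     "\<forall>w\<in>Vc. f0 w = 0 \<longrightarrow> g w = 0"
    using opB_set[OF finS(1) labc yVc(1) f0y SVc] by auto
  have gx: "g (v i) = 0" using g(3) yVc(2) f0x by auto
  have S'V: "S' \<inter> (Vc \<union> S) = {}"
  proof -
    { fix z assume z: "z \<in> S'" "z \<in> Vc \<union> S"
      then have zN: "z \<in> N i" "z \<notin> NP i" unfolding S'_def by auto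
      then have zF: "z \<in> F i" using NFi by auto
      then have "z \<notin> F i'" using Fd by auto
      then have "z \<noteq> v i'" "z \<notin> NP i'" "z \<notin> W i'" "z \<notin> N i'" using vi' NPF WF2 NFi by auto
      moreover have "z \<noteq> v i" using zN vNi by auto
      moreover have "z \<notin> W i" using zN NWi by auto
      ultimately have False using z(2) zN unfolding VcE S_def by auto }
    then show ?thesis by auto
  qed
  obtain h where h: "lab (Vc \<union> S \<union> S') (Pc \<union> (\<lambda>z. (z, v i')) ` S \<union> (\<lambda>z. (v i, z)) ` S') h k'"
     "\<forall>w\<in>Vc \<union> S. h w = g w"
    using opC_set[OF finS(2) g(1) _ gx S'V] yVc(2) by auto
  have Veq: "Vc \<union> S \<union> S' = F i \<union> F i'"
    unfolding VcE S_def S'_def using F_decomp[OF ii(1)] F_decomp[OF ii(2)] NPNi by auto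
  let ?P = "Pc \<union> (\<lambda>z. (z, v i')) ` S \<union> (\<lambda>z. (v i, z)) ` S'"
  have cover: "e \<in> (\<lambda>p. {fst p, snd p}) ` ?P"
    if e: "e \<in> E" and ee: "e \<subseteq> F i \<or> e \<subseteq> F i' \<or> e = {v i, v i'}" for e
  proof -
    have lobe: "e \<in> (\<lambda>p. {fst p, snd p}) ` ?P" if j: "j \<in> {i, i'}" and es: "e \<subseteq> F j" for j
    proof -
      have jr: "j \<in> {1..r}" using j ii by auto
      from lobeE[OF jr e es] show ?thesis
      proof
        assume "\<exists>u\<in>N j. e = {v j, u}"
        then obtain u where u: "u \<in> N j" "e = {v j, u}" by blast
        show ?thesis
        proof (cases "j = i")
          case True
          show ?thesis
          proof (cases "u \<in> NP i")
            case True
            then obtain a where "a < q" "u = ex a" using sx(4) by blast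
            then show ?thesis using Pc2 u \<open>j = i\<close> by (intro image_eqI[where x="(v i, u)"]) auto
          next
            case False
            then have "u \<in> S'" using u \<open>j = i\<close> unfolding S'_def by auto
            then show ?thesis using u \<open>j = i\<close> by (intro image_eqI[where x="(v i, u)"]) auto
          qed
        next
          case False
          then have ji: "j = i'" using j by auto
          show ?thesis
          proof (cases "u \<in> NP i'")
            case True
            then obtain a where "a < q" "u = ey a" using sy(4) by blast
            then show ?thesis using Pc4 u ji by (intro image_eqI[where x="(u, v i')"]) auto
          next
            case False
            then have "u \<in> S" using u ji unfolding S_def by auto
            then show ?thesis using u ji by (intro image_eqI[where x="(u, v i')"]) auto
          qed
        qed
      next
        assume "\<exists>u\<in>N j. \<exists>w\<in>F j - ({v j} \<union> N j). e = {u, w}"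
        then obtain u w where u: "u \<in> N j" and w: "w \<in> W j" and ew: "e = {u,w}" unfolding W_def by blast
        have pu: "par0 j w = u" using T[OF jr u w] e ew by simp
        have wl: "w \<in> LV j u" "u \<in> NP j" using W_cover[OF jr w] pu by auto
        show ?thesis
        proof (cases "j = i")
          case True
          obtain a jj where "a < q" "jj < t" "u = ex a" "w = lx (ex a) jj" using sx(7) wl True by blast
          then show ?thesis using Pc3 ew by (intro image_eqI[where x="(w, u)"]) auto
        next
          case False
          then have ji: "j = i'" using j by auto
          obtain a jj where "a < q" "jj < t" "u = ey a" "w = ly (ey a) jj" using sy(7) wl ji by blast
          then show ?thesis using Pc5 ew by (intro image_eqI[where x="(u, w)"]) auto
        qed
      qed
    qed
    from ee show ?thesis
    proof (elim disjE)
      assume "e = {v i, v i'}"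
      then show ?thesis using Pc1 by (intro image_eqI[where x="(v i, v i')"]) auto
    qed (use lobe[of i] lobe[of i'] in blast)+
  qed
  show ?thesis
    apply (rule exI[of _ ?P], rule exI[of _ h], rule exI[of _ k'])
    using h g gx yVc Veq cover unfolding i'_def by auto
qed

end

context lob begin

lemma blk:
  assumes bal: "pairwise_trivially_balanced E r v F" and i: "i \<in> {1..<r}" and o: "odd i"
  shows "\<exists>P f k. lab (F i \<union> F (Suc i)) P f k \<and> f (v i) = 0 \<and> f (v (Suc i)) = k+1 \<and>
     (\<forall>e\<in>E. (e \<subseteq> F i \<or> e \<subseteq> F (Suc i) \<or> e = {v i, v (Suc i)}) \<longrightarrow> e \<in> (\<lambda>p. {fst p, snd p}) ` P)"
proof -
  obtain q t where "card (NP i) = q" "card (NP (Suc i)) = q"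
     "\<forall>u\<in>NP i. card (LV i u) = t" "\<forall>u\<in>NP (Suc i). card (LV (Suc i) u) = t"
    using bal i o unfolding pairwise_trivially_balanced_def by blast
  then show ?thesis using block[OF i] by blast
qed

lemma chain:
  assumes bal: "pairwise_trivially_balanced E r v F"
  shows "1 \<le> n \<Longrightarrow> 2*n \<le> r \<Longrightarrow> \<exists>P f k. lab (\<Union>i\<in>{1..2*n}. F i) P f k \<and> f (v (2*n)) = k+1 \<and>
    (\<forall>e\<in>E. ((\<exists>i\<in>{1..2*n}. e \<subseteq> F i) \<or> (\<exists>i\<in>{1..<2*n}. e = {v i, v (Suc i)})) \<longrightarrow> e \<in> (\<lambda>p. {fst p, snd p}) ` P)"
proof (induction n)
  case 0
  then show ?case by simp
next
  case (Suc n)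
  show ?case
  proof (cases "n = 0")
    case True
    then have r2: "2 \<le> r" using Suc.prems by simp
    obtain P f k where b: "lab (F 1 \<union> F (Suc 1)) P f k" "f (v 1) = 0" "f (v (Suc 1)) = k+1"
      "\<forall>e\<in>E. (e \<subseteq> F 1 \<or> e \<subseteq> F (Suc 1) \<or> e = {v 1, v (Suc 1)}) \<longrightarrow> e \<in> (\<lambda>p. {fst p, snd p}) ` P"
      using blk[OF bal, of 1] r2 by auto
    have s12: "{1..2*Suc n} = {1, Suc 1}" using True by auto
    have U: "(\<Union>i\<in>{1..2*Suc n}. F i) = F 1 \<union> F (Suc 1)" unfolding s12 by simp
    have c: "\<forall>e\<in>E. ((\<exists>i\<in>{1..2*Suc n}. e \<subseteq> F i) \<or> (\<exists>i\<in>{1..<2*Suc n}. e = {v i, v (Suc i)})) \<longrightarrow> e \<in> (\<lambda>p. {fst p, snd p}) ` P"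
    proof (intro ballI impI)
      fix e assume e: "e \<in> E" and h: "(\<exists>i\<in>{1..2*Suc n}. e \<subseteq> F i) \<or> (\<exists>i\<in>{1..<2*Suc n}. e = {v i, v (Suc i)})"
      have "e \<subseteq> F 1 \<or> e \<subseteq> F (Suc 1) \<or> e = {v 1, v (Suc 1)}"
        using h True by (auto simp: numeral_2_eq_2 le_Suc_eq)
      then show "e \<in> (\<lambda>p. {fst p, snd p}) ` P" using b(4) e by blast
    qed
    show ?thesis using b U c True by (intro exI[of _ P] exI[of _ f] exI[of _ k]) (auto simp: numeral_2_eq_2)
  next
    case False
    then have n1: "1 \<le> n" "2*n \<le> r" using Suc.prems by auto
    obtain P1 f1 k1 where ih: "lab (\<Union>i\<in>{1..2*n}. F i) P1 f1 k1" "f1 (v (2*n)) = k1+1"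
      "\<forall>e\<in>E. ((\<exists>i\<in>{1..2*n}. e \<subseteq> F i) \<or> (\<exists>i\<in>{1..<2*n}. e = {v i, v (Suc i)})) \<longrightarrow> e \<in> (\<lambda>p. {fst p, snd p}) ` P1"
      using Suc.IH[OF n1] by blast
    define i where "i = Suc (2*n)"
    have i: "i \<in> {1..<r}" "odd i" using Suc.prems unfolding i_def by auto
    obtain P2 f2 k2 where b: "lab (F i \<union> F (Suc i)) P2 f2 k2" "f2 (v i) = 0" "f2 (v (Suc i)) = k2+1"
      "\<forall>e\<in>E. (e \<subseteq> F i \<or> e \<subseteq> F (Suc i) \<or> e = {v i, v (Suc i)}) \<longrightarrow> e \<in> (\<lambda>p. {fst p, snd p}) ` P2"
      using blk[OF bal i] by blast
    have rr: "i \<in> {1..r}" "Suc i \<in> {1..r}" using i Suc.prems unfolding i_def by auto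
    have D: "(\<Union>i\<in>{1..2*n}. F i) \<inter> (F i \<union> F (Suc i)) = {}"
    proof -
      { fix j z assume j: "j \<in> {1..2*n}" and z: "z \<in> F j" "z \<in> F i \<union> F (Suc i)"
        have jr: "j \<in> {1..r}" using j n1 by auto
        have "j \<noteq> i" "j \<noteq> Suc i" using j unfolding i_def by auto
        then have False using disj[OF jr rr(1)] disj[OF jr rr(2)] z by auto }
      then show ?thesis by blast
    qed
    have a: "v (2*n) \<in> (\<Union>i\<in>{1..2*n}. F i)" using vF[of "2*n"] n1 by auto
    have bb: "v i \<in> F i \<union> F (Suc i)" using vF[OF rr(1)] by auto
    note gl = glue[OF ih(1) b(1) D a ih(2) bb b(2)]
    define g where "g = (\<lambda>w. if w \<in> (\<Union>i\<in>{1..2*n}. F i) then (if f1 w \<le> k1 then f1 w else f1 w + card (F i \<union> F (Suc i))) else f2 w + k1 + 1)"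
    have U: "(\<Union>i\<in>{1..2*n}. F i) \<union> (F i \<union> F (Suc i)) = (\<Union>i\<in>{1..2*Suc n}. F i)"
    proof -
      have "{1..2*Suc n} = {1..2*n} \<union> {i, Suc i}" unfolding i_def using n1 by auto
      then show ?thesis by auto
    qed
    have gy: "g (v (Suc i)) = (k1+k2+1)+1"
      using gl(2)[of "v (Suc i)"] vF[OF rr(2)] b(3) unfolding g_def by auto
    let ?P = "P1 \<union> P2 \<union> {(v i, v (2*n))}"
    have c: "\<forall>e\<in>E. ((\<exists>j\<in>{1..2*Suc n}. e \<subseteq> F j) \<or> (\<exists>j\<in>{1..<2*Suc n}. e = {v j, v (Suc j)})) \<longrightarrow> e \<in> (\<lambda>p. {fst p, snd p}) ` ?P"
    proof (intro ballI impI)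
      fix e assume e: "e \<in> E" and h: "(\<exists>j\<in>{1..2*Suc n}. e \<subseteq> F j) \<or> (\<exists>j\<in>{1..<2*Suc n}. e = {v j, v (Suc j)})"
      have "((\<exists>j\<in>{1..2*n}. e \<subseteq> F j) \<or> (\<exists>j\<in>{1..<2*n}. e = {v j, v (Suc j)}))
        \<or> (e \<subseteq> F i \<or> e \<subseteq> F (Suc i) \<or> e = {v i, v (Suc i)}) \<or> e = {v (2*n), v i}"
      proof -
        have s1: "{1..2*Suc n} = {1..2*n} \<union> {i, Suc i}" unfolding i_def using n1 by auto
        have s2: "{1..<2*Suc n} = {1..<2*n} \<union> {2*n, i}" unfolding i_def using n1 by auto
        show ?thesis using h unfolding s1 s2 i_def by auto
      qed
      then consider (o) "(\<exists>j\<in>{1..2*n}. e \<subseteq> F j) \<or> (\<exists>j\<in>{1..<2*n}. e = {v j, v (Suc j)})"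
        | (bk) "e \<subseteq> F i \<or> e \<subseteq> F (Suc i) \<or> e = {v i, v (Suc i)}" | (c) "e = {v (2*n), v i}"
        by blast
      then show "e \<in> (\<lambda>p. {fst p, snd p}) ` ?P"
      proof cases
        case o
        then have "e \<in> (\<lambda>p. {fst p, snd p}) ` P1" using ih(3) e by blast
        then show ?thesis by auto
      next
        case bk
        then have "e \<in> (\<lambda>p. {fst p, snd p}) ` P2" using b(4) e by blast
        then show ?thesis by auto
      next
        case c
        then show ?thesis by (intro image_eqI[where x="(v i, v (2*n))"]) auto
      qed
    qed
    have gy': "g (v (2*Suc n)) = (k1+k2+1)+1" using gy unfolding i_def by simp
    show ?thesis
      using gl(1) gy' U c unfolding g_def[symmetric] by (intro exI[of _ ?P] exI[of _ g] exI[of _ "k1+k2+1"]) simp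
  qed
qed

lemma main:
  assumes bal: "pairwise_trivially_balanced E r v F"
  shows "\<exists>f k. complete_alpha_labeling V E f k"
proof -
  have ev: "even r" using bal unfolding pairwise_trivially_balanced_def by auto
  have r0: "r \<noteq> 0" using Vne Vdef by auto
  define n where "n = r div 2"
  have n: "1 \<le> n" "2*n \<le> r" "2*n = r" using ev r0 unfolding n_def by auto
  obtain P f k where L: "lab (\<Union>i\<in>{1..2*n}. F i) P f k"
    and c: "\<forall>e\<in>E. ((\<exists>i\<in>{1..2*n}. e \<subseteq> F i) \<or> (\<exists>i\<in>{1..<2*n}. e = {v i, v (Suc i)})) \<longrightarrow> e \<in> (\<lambda>p. {fst p, snd p}) ` P"
    using chain[OF bal n(1,2)] by blast
  have LV: "lab V P f k" using L n(3) Vdef by simp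
  have cov: "\<And>e. e \<in> E \<Longrightarrow> \<exists>p\<in>P. e = {fst p, snd p}"
  proof -
    fix e assume e: "e \<in> E"
    then have "e \<in> {{v i, v (Suc i)} | i. 1 \<le> i \<and> i < r} \<union> (\<Union>i\<in>{1..r}. {e \<in> E. e \<subseteq> F i})"
      by (subst (asm) Edef)
    then have "(\<exists>i\<in>{1..r}. e \<subseteq> F i) \<or> (\<exists>i\<in>{1..<r}. e = {v i, v (Suc i)})"
      by auto
    then have "e \<in> (\<lambda>p. {fst p, snd p}) ` P" using c e n(3) by metis
    then show "\<exists>p\<in>P. e = {fst p, snd p}" by auto
  qed
  note B = lab_basic[OF LV]
  have bij: "bij_betw f V {0..card E}" using LV cardE unfolding lab_def by simp
  have ed: "\<exists>p\<in>P. ((x = fst p \<and> y = snd p) \<or> (x = snd p \<and> y = fst p))" if xy: "{x,y} \<in> E" for x y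
  proof -
    obtain p where p: "p \<in> P" "{x,y} = {fst p, snd p}" using cov[OF xy] by blast
    then show ?thesis by (auto simp: doubleton_eq_iff)
  qed
  have absd: "\<bar>int (f x) - int (f y)\<bar> = int (f (snd p) - f (fst p))"
    if "p \<in> P" "(x = fst p \<and> y = snd p) \<or> (x = snd p \<and> y = fst p)" for x y p
    using B(5)[OF that(1)] that(2) by auto
  have "alpha_labeling V E f k"
    unfolding alpha_labeling_def
  proof (intro conjI allI impI)
    show "inj_on f V" using bij unfolding bij_betw_def by simp
    show "f ` V \<subseteq> {0..card E}" using bij unfolding bij_betw_def by simp
  next
    fix x y x' y' assume e1: "{x,y} \<in> E" and e2: "{x',y'} \<in> E"
      and eq: "\<bar>int (f x) - int (f y)\<bar> = \<bar>int (f x') - int (f y')\<bar>"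
    obtain p where p: "p \<in> P" "(x = fst p \<and> y = snd p) \<or> (x = snd p \<and> y = fst p)" using ed[OF e1] by blast
    obtain p' where p': "p' \<in> P" "(x' = fst p' \<and> y' = snd p') \<or> (x' = snd p' \<and> y' = fst p')" using ed[OF e2] by blast
    have "f (snd p) - f (fst p) = f (snd p') - f (fst p')" using eq absd[OF p] absd[OF p'] by simp
    then have "p = p'" using B(6) p(1) p'(1) by (auto simp: inj_on_def)
    then show "{x,y} = {x',y'}" using p p' by auto
  next
    fix x y assume e1: "{x,y} \<in> E"
    obtain p where p: "p \<in> P" "(x = fst p \<and> y = snd p) \<or> (x = snd p \<and> y = fst p)" using ed[OF e1] by blast
    then show "(f x \<le> k \<and> k < f y) \<or> (f y \<le> k \<and> k < f x)" using B(5)[OF p(1)] by auto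
  qed
  then show ?thesis unfolding complete_alpha_labeling_def using bij by blast
qed

end

theorem corollary4p14:
  fixes V :: "'a set" and E :: "'a set set" and r :: nat
    and v :: "nat \<Rightarrow> 'a" and F :: "nat \<Rightarrow> 'a set"
  assumes "lobster_description V E r v F"
    and "pairwise_trivially_balanced E r v F"
  shows "\<exists>f k. complete_alpha_labeling V E f k"
proof -
  interpret lob V E r v F using assms(1) by unfold_locales
  show ?thesis using main[OF assms(2)] .
qed

end
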